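(* Let $\mathcal X$ be a Banach space and $0<T\le1$. Let $J:\{(v,u):0\le u\le v\le T\}\to\mathcal X$ be continuous with $J_{u,u}=0$, and for $u\le m\le v$ set $\delta J_{v,m,u}=J_{v,u}-J_{v,m}-J_{m,u}$. Fix $0\le s\le t\le T$ and suppose that the limit $$\mathscr J_{t,s}=\lim_{n\to\infty}\sum_{[u,v]\in\pi_n(s,t)}J_{v,u}$$ exists in $\mathcal X$, where $\pi_n(s,t)$ is the $n$-th dyadic partition of $[s,t]$ into $2^n$ intervals of length $2^{-n}(t-s)$. Let $l\in\mathbb N$. For $i=1,\dots,l$, let $\mu_i>1$, $0\le\lambda_i<\mu_i$, $\nu_i\in[0,\mu_i]$, $\varepsilon_i\in[0,1)$ and $A_i\ge0$ be such that $$|\delta J_{v,m,u}|_{\mathcal X}\le\sum_{i=1}^lA_i|t-u|^{-\lambda_i}|u-m|^{\nu_i}|m-v|^{\mu_i-\nu_i}m^{-\varepsilon_i}$$ for all $s\le u\le m\le v\le t$ with $m>0$. Let $\omega\in[0,\max_i\varepsilon_i]$ be such that $(\varepsilon_i-\omega)_+<\mu_i-\lambda_i$ for each $i=1,\dots,l$. Then $$s^\omega|\mathscr J_{t,s}-J_{t,s}|_{\mathcal X}\lesssim\sum_{i=1}^lA_i|t-s|^{\mu_i-\lambda_i-(\varepsilon_i-\omega)_+},$$ with an implied constant depending only on the exponents $\mu_i,\lambda_i,\nu_i,\varepsilon_i,\omega$.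
   Context: Here $x_+=\max(x,0)$. The $n$-th dyadic partition is $$\pi_n(s,t)=\{s\le s+2^{-n}(t-s)\le\dots\le t-2^{-n}(t-s)\le t\},$$ and $[u,v]\in\pi_n(s,t)$ ranges over its consecutive intervals. *)

theory Defs
  imports "HOL-Analysis.Analysis"
begin

text \<open>Real power with the paper's convention 0^0 = 1 (and 0^a = 0 for a \<noteq> 0).\<close>
definition pw :: "real \<Rightarrow> real \<Rightarrow> real" where
  "pw x a = (if x = 0 then (if a = 0 then 1 else 0) else x powr a)"

definition pos_part :: "real \<Rightarrow> real" where
  "pos_part x = max x 0"

text \<open>Increment \<delta>J_{v,m,u} = J_{v,u} - J_{v,m} - J_{m,u}; J v u stands for J_{v,u}.\<close>
definition deltaJ :: "(real \<Rightarrow> real \<Rightarrow> 'a::real_normed_vector) \<Rightarrow> real \<Rightarrow> real \<Rightarrow> real \<Rightarrow> 'a" where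
  "deltaJ J v m u = J v u - J v m - J m u"

definition dyadic_sum :: "(real \<Rightarrow> real \<Rightarrow> 'a::real_normed_vector) \<Rightarrow> real \<Rightarrow> real \<Rightarrow> nat \<Rightarrow> 'a" where
  "dyadic_sum J s t n =
     (\<Sum>k<(2::nat)^n. J (s + real (Suc k) * (t - s) / 2^n) (s + real k * (t - s) / 2^n))"

end

theory Submission
  imports Defs
begin

lemma psum_step:
  fixes x c :: real
  assumes "0 \<le> c" "c < 1" "0 \<le> x"
  shows "x powr (1-c) + (1-c) * (x+1) powr (-c) \<le> (x+1) powr (1-c)"
proof (cases "x = 0")
  case True then show ?thesis using assms by simp
next
  case False
  then have xp: "x > 0" using assms by simp
  have y: "x powr (1-c) * (x+1) powr c \<le> (1-c)*x + c*(x+1)"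
    using Youngs_inequality_0[of "1-c" c x "x+1"] assms xp by simp
  have e1: "(x+1) powr (1-c) = (x+1) * (x+1) powr (-c)"
  proof -
    have "x+1 > 0" using xp by simp
    then show ?thesis by (simp add: powr_diff powr_minus divide_inverse)
  qed
  have e2: "x powr (1-c) = (x powr (1-c) * (x+1) powr c) * (x+1) powr (-c)"
    using xp by (simp add: powr_minus powr_gt_zero)
  have "(x powr (1-c) * (x+1) powr c) * (x+1) powr (-c) \<le> ((1-c)*x + c*(x+1)) * (x+1) powr (-c)"
    by (rule mult_right_mono[OF y]) simp
  then have "x powr (1-c) \<le> ((1-c)*x + c*(x+1)) * (x+1) powr (-c)"
    using e2 by linarith
  then show ?thesis unfolding e1 by (simp add: algebra_simps)
qed

lemma psum:
  fixes c :: real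
  assumes "0 \<le> c" "c < 1"
  shows "(\<Sum>k<N. (real k + 1) powr (-c)) \<le> real N powr (1-c) / (1-c)"
proof (induction N)
  case 0 then show ?case by simp
next
  case (Suc N)
  have "(\<Sum>k<Suc N. (real k + 1) powr (-c)) \<le> real N powr (1-c) / (1-c) + (real N + 1) powr (-c)"
    using Suc by simp
  also have "\<dots> \<le> (real N + 1) powr (1-c) / (1-c)"
  proof -
    have "real N powr (1-c) / (1-c) + (real N + 1) powr (-c) = (real N powr (1-c) + (1-c) * (real N + 1) powr (-c)) / (1-c)"
      using assms by (simp add: field_simps)
    also have "\<dots> \<le> (real N + 1) powr (1-c) / (1-c)"
      using psum_step[of c "real N"] assms by (intro divide_right_mono) auto
    finally show ?thesis .
  qed
  finally show ?case by (simp add: add.commute)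
qed

lemma psum_rev:
  "(\<Sum>k<N. f (N - k)) = (\<Sum>k<N. f (Suc k))"
  by (rule sum.reindex_bij_witness[where i="\<lambda>k. N - Suc k" and j="\<lambda>k. N - Suc k"]) (auto simp: Suc_diff_Suc)

lemma split2: "(\<Sum>j<2*(N::nat). f j) = (\<Sum>k<N. f (2*k) + f (2*k+1))"
  by (induction N) (auto simp: ac_simps)

lemma term_bd:
  fixes x y lam a c :: real
  assumes "1 \<le> x" "1/2 \<le> y" "0 \<le> lam" "0 \<le> a" "0 \<le> c" "c \<le> lam + a"
  shows "x powr (-lam) * y powr (-a) \<le> 2 powr a * (x powr (-c) + y powr (-c))"
proof -
  define l' where "l' = min lam c"
  define a' where "a' = c - l'"
  have l'0: "0 \<le> l'" "l' \<le> lam" using assms by (auto simp: l'_def)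
  have a'0: "0 \<le> a'" "a' \<le> a" using assms by (auto simp: a'_def l'_def)
  have xp: "x > 0" and yp: "y > 0" using assms by auto
  have h1: "x powr (-lam) \<le> x powr (-l')" using l'0 assms by (intro powr_mono) auto
  have ysplit: "y powr (-a) = y powr (-a') * y powr (-(a-a'))"
    by (simp add: powr_add[symmetric])
  have h2: "y powr (-(a-a')) \<le> (1/2) powr (-(a-a'))"
    using a'0 assms by (intro powr_mono2') auto
  have h3: "(1/2::real) powr (-(a-a')) = 2 powr (a-a')"
    using powr_minus_divide[of 2 "a'-a"] by (simp add: powr_divide)
  have h4: "(2::real) powr (a-a') \<le> 2 powr a" using a'0 by (intro powr_mono) auto
  have h5: "y powr (-(a-a')) \<le> 2 powr a" using h2 h3 h4 by linarith
  have h6: "x powr (-l') * y powr (-a') \<le> x powr (-c) + y powr (-c)"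
  proof (cases "x \<le> y")
    case True
    have "y powr (-a') \<le> x powr (-a')" using True a'0 xp by (intro powr_mono2') auto
    then have "x powr (-l') * y powr (-a') \<le> x powr (-l') * x powr (-a')"
      by (intro mult_left_mono) auto
    also have "\<dots> = x powr (-c)" by (simp add: powr_add[symmetric] a'_def)
    finally show ?thesis by (smt (verit) powr_ge_zero)
  next
    case False
    have "x powr (-l') \<le> y powr (-l')" using False l'0 yp by (intro powr_mono2') auto
    then have "x powr (-l') * y powr (-a') \<le> y powr (-l') * y powr (-a')"
      by (intro mult_right_mono) auto
    also have "\<dots> = y powr (-c)" by (simp add: powr_add[symmetric] a'_def)
    finally show ?thesis by (smt (verit) powr_ge_zero)
  qed
  have "x powr (-lam) * y powr (-a) \<le> x powr (-l') * (y powr (-a') * y powr (-(a-a')))"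
    unfolding ysplit by (intro mult_right_mono h1) auto
  also have "\<dots> = (x powr (-l') * y powr (-a')) * y powr (-(a-a'))" by simp
  also have "\<dots> \<le> (x powr (-c) + y powr (-c)) * 2 powr a"
    by (intro mult_mono h6 h5) auto
  finally show ?thesis by (simp add: mult.commute)
qed

lemma half_bd:
  fixes c :: real assumes "0 \<le> c"
  shows "(real k + 1/2) powr (-c) \<le> 2 powr c * (real k + 1) powr (-c)"
proof -
  have "(real k + 1/2) powr (-c) \<le> ((real k + 1)/2) powr (-c)"
    using assms by (intro powr_mono2') auto
  also have "\<dots> = 2 powr c * (real k + 1) powr (-c)"
    by (simp add: powr_divide powr_minus_divide)
  finally show ?thesis .
qed

lemma S_bd:
  fixes lam a c :: real
  assumes "0 \<le> lam" "0 \<le> a" "0 \<le> c" "c \<le> lam + a" "c < 1"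
  shows "(\<Sum>k<N. (real N - real k) powr (-lam) * (real k + 1/2) powr (-a))
     \<le> 2 powr a * (1 + 2 powr c) / (1 - c) * real N powr (1 - c)"
proof -
  have "(\<Sum>k<N. (real N - real k) powr (-lam) * (real k + 1/2) powr (-a))
     \<le> (\<Sum>k<N. 2 powr a * ((real N - real k) powr (-c) + 2 powr c * (real k + 1) powr (-c)))"
  proof (rule sum_mono)
    fix k assume "k \<in> {..<N}"
    then have "1 \<le> real N - real k" by auto
    then have "(real N - real k) powr (-lam) * (real k + 1/2) powr (-a)
       \<le> 2 powr a * ((real N - real k) powr (-c) + (real k + 1/2) powr (-c))"
      using assms by (intro term_bd) auto
    also have "\<dots> \<le> 2 powr a * ((real N - real k) powr (-c) + 2 powr c * (real k + 1) powr (-c))"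
      using half_bd[OF assms(3), of k] by (intro mult_left_mono add_left_mono) auto
    finally show "(real N - real k) powr (-lam) * (real k + 1/2) powr (-a)
       \<le> 2 powr a * ((real N - real k) powr (-c) + 2 powr c * (real k + 1) powr (-c))" .
  qed
  also have "\<dots> = 2 powr a * ((\<Sum>k<N. real (N - k) powr (-c)) + 2 powr c * (\<Sum>k<N. (real k + 1) powr (-c)))"
  proof -
    have "(\<Sum>k<N. 2 powr a * ((real N - real k) powr (-c) + 2 powr c * (real k + 1) powr (-c)))
       = (\<Sum>k<N. 2 powr a * (real (N - k) powr (-c) + 2 powr c * (real k + 1) powr (-c)))"
      by (intro sum.cong refl) (simp add: of_nat_diff)
    also have "\<dots> = 2 powr a * ((\<Sum>k<N. real (N - k) powr (-c)) + 2 powr c * (\<Sum>k<N. (real k + 1) powr (-c)))"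
      by (simp only: sum_distrib_left[symmetric] sum.distrib)
    finally show ?thesis .
  qed
  also have "(\<Sum>k<N. real (N - k) powr (-c)) = (\<Sum>k<N. (real k + 1) powr (-c))"
    using psum_rev[of "\<lambda>j. real j powr (-c)" N] by (simp add: add.commute)
  also have "2 powr a * ((\<Sum>k<N. (real k + 1) powr (-c)) + 2 powr c * (\<Sum>k<N. (real k + 1) powr (-c)))
     = 2 powr a * (1 + 2 powr c) * (\<Sum>k<N. (real k + 1) powr (-c))" by (simp add: algebra_simps)
  also have "\<dots> \<le> 2 powr a * (1 + 2 powr c) * (real N powr (1-c) / (1-c))"
    using psum[OF assms(3,5)] by (intro mult_left_mono) auto
  finally show ?thesis by simp
qed

lemma pw_pos: "x > 0 \<Longrightarrow> pw x a = x powr a" by (simp add: pw_def)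
lemma pw_nonneg: "x \<ge> 0 \<Longrightarrow> pw x a \<ge> 0" by (simp add: pw_def)

lemma W:
  assumes "0 \<le> s" "s \<le> m" "m \<le> 1" "0 < m" "0 \<le> om" "0 \<le> eps"
  shows "pw s om * m powr (-eps) \<le> m powr (-pos_part(eps-om))"
proof (cases "s = 0")
  case True
  then show ?thesis
  proof (cases "om = 0")
    case True then show ?thesis using \<open>s=0\<close> assms(6) by (simp add: pw_def pos_part_def)
  qed (simp add: pw_def)
next
  case False
  then have sp: "s > 0" using assms by simp
  have "pw s om * m powr (-eps) \<le> m powr om * m powr (-eps)"
    using sp assms by (simp add: pw_pos powr_mono2 mult_right_mono)
  also have "\<dots> = m powr (om - eps)" by (simp add: powr_add[symmetric])
  also have "\<dots> \<le> m powr (-pos_part(eps-om))"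
  proof (cases "om \<le> eps")
    case True then show ?thesis by (simp add: pos_part_def)
  next
    case False
    then have "m powr (om - eps) \<le> m powr 0" using assms by (intro powr_mono') auto
    then show ?thesis using False assms by (simp add: pos_part_def)
  qed
  finally show ?thesis .
qed

lemma point_bd:
  fixes s h N t u m v :: real and k :: nat
  assumes "0 \<le> s" "0 < h" "t \<le> 1" "real k + 1 \<le> N" "0 \<le> om" "0 \<le> lam" "0 \<le> eps"
    and eqs: "u = s + k*h" "m = s + (k+1/2)*h" "v = s+(k+1)*h" "t = s + N*h"
  shows "pw s om * (pw \<bar>t - u\<bar> (-lam) * pw \<bar>u - m\<bar> nu * pw \<bar>m - v\<bar> (mu-nu) * pw m (-eps))
     \<le> 2 powr (-mu) * h powr (mu-lam-pos_part(eps-om)) * ((N - k) powr (-lam) * (k+1/2) powr (-pos_part(eps-om)))"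
proof -
  define a where "a = pos_part(eps-om)"
  have a0: "a \<ge> 0" by (simp add: a_def pos_part_def)
  have t1: "\<bar>t - u\<bar> = (N-k)*h" using eqs assms by (simp add: algebra_simps)
  have t2: "\<bar>u - m\<bar> = h/2" using eqs assms by (simp add: algebra_simps)
  have t3: "\<bar>m - v\<bar> = h/2" using eqs assms by (simp add: algebra_simps)
  have Nk: "N - k > 0" using assms by simp
  have mp: "m > 0" using eqs assms by (simp add: add_nonneg_pos)
  have "(real k + 1/2)*h \<le> N*h" using assms by (intro mult_right_mono) auto
  then have m1: "m \<le> 1" using eqs assms by linarith
  have P1: "pw \<bar>t - u\<bar> (-lam) = (N-k) powr (-lam) * h powr (-lam)"
    unfolding t1 using Nk assms by (simp add: pw_pos powr_mult)
  have P23: "pw \<bar>u - m\<bar> nu * pw \<bar>m - v\<bar> (mu-nu) = 2 powr (-mu) * h powr mu"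
    unfolding t2 t3 using assms by (simp add: pw_pos powr_add[symmetric] powr_divide powr_minus_divide)
  have P4: "pw s om * pw m (-eps) \<le> (k+1/2) powr (-a) * h powr (-a)"
  proof -
    have "s \<le> m" using eqs assms by simp
    then have "pw s om * pw m (-eps) \<le> m powr (-a)"
      unfolding a_def using W[of s m om eps] assms(1,5,7) mp m1 by (simp add: pw_pos)
    also have "\<dots> \<le> ((k+1/2)*h) powr (-a)"
      using a0 assms eqs by (intro powr_mono2') auto
    also have "\<dots> = (k+1/2) powr (-a) * h powr (-a)"
      using assms by (simp add: powr_mult)
    finally show ?thesis .
  qed
  have "pw s om * (pw \<bar>t - u\<bar> (-lam) * pw \<bar>u - m\<bar> nu * pw \<bar>m - v\<bar> (mu-nu) * pw m (-eps))
     = pw \<bar>t - u\<bar> (-lam) * (pw \<bar>u - m\<bar> nu * pw \<bar>m - v\<bar> (mu-nu)) * (pw s om * pw m (-eps))"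
    by (simp add: ac_simps)
  also have "\<dots> \<le> ((N-k) powr (-lam) * h powr (-lam)) * (2 powr (-mu) * h powr mu) * ((k+1/2) powr (-a) * h powr (-a))"
    unfolding P1 P23 by (intro mult_left_mono P4) auto
  also have "\<dots> = 2 powr (-mu) * (h powr (-lam) * h powr mu * h powr (-a)) * ((N - k) powr (-lam) * (k+1/2) powr (-a))"
    by (simp add: ac_simps)
  also have "h powr (-lam) * h powr mu * h powr (-a) = h powr (mu-lam-a)"
    by (simp add: powr_add[symmetric])
  finally show ?thesis by (simp add: a_def)
qed

lemma pow2_powr: "((2::real)^p) powr x = (2 powr x)^p"
proof -
  have "((2::real)^p) powr x = (2 powr real p) powr x" by (simp add: powr_realpow)
  also have "\<dots> = (2 powr x) powr real p" by (simp add: powr_powr mult.commute)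
  also have "\<dots> = (2 powr x)^p" by (simp add: powr_realpow)
  finally show ?thesis .
qed

lemma level_bound:
  fixes mu lam nu eps om :: real
  assumes "1 < mu" "0 \<le> lam" "0 \<le> eps" "0 \<le> om" "pos_part (eps - om) < mu - lam"
  shows "\<exists>C\<ge>0. \<forall>s t n. 0 \<le> s \<and> s < t \<and> t \<le> 1 \<longrightarrow>
     pw s om * (\<Sum>p<n. \<Sum>k<(2::nat)^p.
        pw \<bar>t - (s + real k * (t - s) / 2^p)\<bar> (-lam)
      * pw \<bar>(s + real k * (t - s) / 2^p) - (s + (2*real k + 1) * (t - s) / 2^(Suc p))\<bar> nu
      * pw \<bar>(s + (2*real k + 1) * (t - s) / 2^(Suc p)) - (s + real (Suc k) * (t - s) / 2^p)\<bar> (mu - nu)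
      * pw (s + (2*real k + 1) * (t - s) / 2^(Suc p)) (-eps))
     \<le> C * pw \<bar>t - s\<bar> (mu - lam - pos_part (eps - om))"
proof -
  define a where "a = pos_part (eps - om)"
  define e where "e = mu - lam - a"
  define c where "c = min (lam + a) ((1 + max 0 (1 - e)) / 2)"
  define q where "q = (2::real) powr (1 - c - e)"
  define K0 where "K0 = 2 powr a * (1 + 2 powr c) / (1 - c)"
  define C where "C = 2 powr (-mu) * K0 / (1 - q)"
  have a0: "0 \<le> a" by (simp add: a_def pos_part_def)
  have e0: "0 < e" using assms by (simp add: e_def a_def)
  have c0: "0 \<le> c" "c < 1" "c \<le> lam + a" "1 - c - e < 0"
    using a0 e0 assms unfolding c_def e_def min_def max_def by (auto split: if_splits simp: field_simps)
  have "(2::real) powr (1 - c - e) < 2 powr 0" using c0 by (intro powr_less_mono) auto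
  then have q0: "0 < q" "q < 1" by (auto simp: q_def)
  have K0p: "0 \<le> K0" using c0 by (simp add: K0_def)
  have C0: "0 \<le> C" using q0 K0p by (simp add: C_def)
  show ?thesis
  proof (intro exI[of _ C] conjI allI impI C0)
    fix s t :: real and n :: nat
    assume st: "0 \<le> s \<and> s < t \<and> t \<le> 1"
    define L where "L = t - s"
    have L0: "0 < L" using st by (simp add: L_def)
    have lev: "pw s om * (\<Sum>k<(2::nat)^p.
        pw \<bar>t - (s + real k * (t - s) / 2^p)\<bar> (-lam)
      * pw \<bar>(s + real k * (t - s) / 2^p) - (s + (2*real k + 1) * (t - s) / 2^(Suc p))\<bar> nu
      * pw \<bar>(s + (2*real k + 1) * (t - s) / 2^(Suc p)) - (s + real (Suc k) * (t - s) / 2^p)\<bar> (mu - nu)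
      * pw (s + (2*real k + 1) * (t - s) / 2^(Suc p)) (-eps))
      \<le> 2 powr (-mu) * K0 * L powr e * q^p" for p
    proof -
      define h where "h = L / 2^p"
      define N where "N = (2::real)^p"
      have hq: "h powr e * real ((2::nat)^p) powr (1 - c) = L powr e * q^p"
      proof -
        have "h powr e * real ((2::nat)^p) powr (1 - c) = L powr e * (((2::real)^p) powr (-e) * ((2::real)^p) powr (1-c))"
          using L0 by (simp add: h_def powr_divide powr_minus_divide)
        also have "\<dots> = L powr e * ((2::real)^p) powr (1 - c - e)"
          by (simp add: powr_add[symmetric])
        also have "\<dots> = L powr e * q^p" by (simp add: pow2_powr q_def)
        finally show ?thesis .
      qed
      have h0: "0 < h" using L0 by (simp add: h_def)
      have "pw s om * (\<Sum>k<(2::nat)^p.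
        pw \<bar>t - (s + real k * (t - s) / 2^p)\<bar> (-lam)
      * pw \<bar>(s + real k * (t - s) / 2^p) - (s + (2*real k + 1) * (t - s) / 2^(Suc p))\<bar> nu
      * pw \<bar>(s + (2*real k + 1) * (t - s) / 2^(Suc p)) - (s + real (Suc k) * (t - s) / 2^p)\<bar> (mu - nu)
      * pw (s + (2*real k + 1) * (t - s) / 2^(Suc p)) (-eps))
      = (\<Sum>k<(2::nat)^p. pw s om * (
        pw \<bar>t - (s + real k * (t - s) / 2^p)\<bar> (-lam)
      * pw \<bar>(s + real k * (t - s) / 2^p) - (s + (2*real k + 1) * (t - s) / 2^(Suc p))\<bar> nu
      * pw \<bar>(s + (2*real k + 1) * (t - s) / 2^(Suc p)) - (s + real (Suc k) * (t - s) / 2^p)\<bar> (mu - nu)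
      * pw (s + (2*real k + 1) * (t - s) / 2^(Suc p)) (-eps)))"
        by (simp add: sum_distrib_left)
      also have "\<dots> \<le> (\<Sum>k<(2::nat)^p. 2 powr (-mu) * h powr e * ((N - real k) powr (-lam) * (real k + 1/2) powr (-a)))"
      proof (rule sum_mono)
        fix k assume k: "k \<in> {..<(2::nat)^p}"
        have kN: "real k + 1 \<le> N"
        proof -
          have "k + 1 \<le> 2^p" using k by simp
          then have "real (k+1) \<le> real ((2::nat)^p)" by (simp only: of_nat_le_iff)
          then show ?thesis by (simp add: N_def)
        qed
        have e1: "s + real k * (t - s) / 2^p = s + real k * h" by (simp add: h_def L_def)
        have e2: "s + (2*real k + 1) * (t - s) / 2^(Suc p) = s + (real k + 1/2) * h"
          by (simp add: h_def L_def field_simps)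
        have e3: "s + real (Suc k) * (t - s) / 2^p = s + real (k+1) * h" by (simp add: h_def L_def)
        have e4: "t = s + N * h" by (simp add: h_def L_def N_def)
        show "pw s om * (
        pw \<bar>t - (s + real k * (t - s) / 2^p)\<bar> (-lam)
      * pw \<bar>(s + real k * (t - s) / 2^p) - (s + (2*real k + 1) * (t - s) / 2^(Suc p))\<bar> nu
      * pw \<bar>(s + (2*real k + 1) * (t - s) / 2^(Suc p)) - (s + real (Suc k) * (t - s) / 2^p)\<bar> (mu - nu)
      * pw (s + (2*real k + 1) * (t - s) / 2^(Suc p)) (-eps))
      \<le> 2 powr (-mu) * h powr e * ((N - real k) powr (-lam) * (real k + 1/2) powr (-a))"
          unfolding e_def a_def
          by (rule point_bd[OF _ h0 _ kN assms(4) assms(2) assms(3) e1 e2 e3 e4]) (use st in auto)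
      qed
      also have "\<dots> = 2 powr (-mu) * h powr e * (\<Sum>k<(2::nat)^p. (real ((2::nat)^p) - real k) powr (-lam) * (real k + 1/2) powr (-a))"
        by (simp add: sum_distrib_left N_def)
      also have "\<dots> \<le> 2 powr (-mu) * h powr e * (K0 * real ((2::nat)^p) powr (1 - c))"
      proof (intro mult_left_mono)
        show "(\<Sum>k<(2::nat)^p. (real ((2::nat)^p) - real k) powr (-lam) * (real k + 1/2) powr (-a))
           \<le> K0 * real ((2::nat)^p) powr (1 - c)"
          unfolding K0_def by (rule S_bd[OF assms(2) a0 c0(1) c0(3) c0(2), of "2^p"])
      qed auto
      also have "2 powr (-mu) * h powr e * (K0 * real ((2::nat)^p) powr (1 - c)) = 2 powr (-mu) * K0 * (h powr e * real ((2::nat)^p) powr (1 - c))"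
        by (simp add: ac_simps)
      also have "\<dots> = 2 powr (-mu) * K0 * L powr e * q^p" unfolding hq by (simp add: ac_simps)
      finally show ?thesis by (simp add: ac_simps)
    qed
    have "pw s om * (\<Sum>p<n. \<Sum>k<(2::nat)^p.
        pw \<bar>t - (s + real k * (t - s) / 2^p)\<bar> (-lam)
      * pw \<bar>(s + real k * (t - s) / 2^p) - (s + (2*real k + 1) * (t - s) / 2^(Suc p))\<bar> nu
      * pw \<bar>(s + (2*real k + 1) * (t - s) / 2^(Suc p)) - (s + real (Suc k) * (t - s) / 2^p)\<bar> (mu - nu)
      * pw (s + (2*real k + 1) * (t - s) / 2^(Suc p)) (-eps))
      = (\<Sum>p<n. pw s om * (\<Sum>k<(2::nat)^p.
        pw \<bar>t - (s + real k * (t - s) / 2^p)\<bar> (-lam)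
      * pw \<bar>(s + real k * (t - s) / 2^p) - (s + (2*real k + 1) * (t - s) / 2^(Suc p))\<bar> nu
      * pw \<bar>(s + (2*real k + 1) * (t - s) / 2^(Suc p)) - (s + real (Suc k) * (t - s) / 2^p)\<bar> (mu - nu)
      * pw (s + (2*real k + 1) * (t - s) / 2^(Suc p)) (-eps)))"
      by (simp add: sum_distrib_left)
    also have "\<dots> \<le> (\<Sum>p<n. 2 powr (-mu) * K0 * L powr e * q^p)"
      by (intro sum_mono lev)
    also have "\<dots> = 2 powr (-mu) * K0 * L powr e * (\<Sum>p<n. q^p)"
      by (simp add: sum_distrib_left)
    also have "\<dots> \<le> 2 powr (-mu) * K0 * L powr e * (1 / (1 - q))"
    proof (intro mult_left_mono)
      have "(\<Sum>p<n. q^p) = (1 - q^n) / (1 - q)" using q0 by (simp add: sum_gp_strict)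
      also have "\<dots> \<le> 1 / (1 - q)" using q0 by (intro divide_right_mono) auto
      finally show "(\<Sum>p<n. q^p) \<le> 1 / (1 - q)" .
    qed (use K0p in auto)
    also have "\<dots> = C * pw \<bar>t - s\<bar> (mu - lam - pos_part (eps - om))"
      using L0 by (simp add: C_def L_def pw_pos e_def a_def)
    finally show "pw s om * (\<Sum>p<n. \<Sum>k<(2::nat)^p.
        pw \<bar>t - (s + real k * (t - s) / 2^p)\<bar> (-lam)
      * pw \<bar>(s + real k * (t - s) / 2^p) - (s + (2*real k + 1) * (t - s) / 2^(Suc p))\<bar> nu
      * pw \<bar>(s + (2*real k + 1) * (t - s) / 2^(Suc p)) - (s + real (Suc k) * (t - s) / 2^p)\<bar> (mu - nu)
      * pw (s + (2*real k + 1) * (t - s) / 2^(Suc p)) (-eps))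
     \<le> C * pw \<bar>t - s\<bar> (mu - lam - pos_part (eps - om))" .
  qed
qed

lemma dyadic0: "dyadic_sum J s t 0 = J t s" by (simp add: dyadic_sum_def)

lemma sum_aux: "(\<Sum>k\<in>A. f k + g k) - (\<Sum>k\<in>A. h k) = - (\<Sum>k\<in>A. h k - g k - f k)"
  for f g h :: "_ \<Rightarrow> 'a::ab_group_add"
  by (simp add: sum_subtractf sum.distrib algebra_simps)

lemma dyadic_step:
  "dyadic_sum J s t (Suc p) - dyadic_sum J s t p = - (\<Sum>k<(2::nat)^p.
     deltaJ J (s + real (Suc k) * (t - s) / 2^p) (s + (2*real k + 1) * (t - s) / 2^(Suc p)) (s + real k * (t - s) / 2^p))"
proof -
  have "dyadic_sum J s t (Suc p) = (\<Sum>k<(2::nat)^p.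
      J (s + (2*real k + 1) * (t - s) / 2^(Suc p)) (s + real k * (t - s) / 2^p)
    + J (s + real (Suc k) * (t - s) / 2^p) (s + (2*real k + 1) * (t - s) / 2^(Suc p)))"
  proof -
    have "dyadic_sum J s t (Suc p) = (\<Sum>j<2*(2::nat)^p. J (s + real (Suc j) * (t - s) / 2^(Suc p)) (s + real j * (t - s) / 2^(Suc p)))"
      by (simp add: dyadic_sum_def)
    also have "\<dots> = (\<Sum>k<(2::nat)^p. J (s + real (Suc (2*k)) * (t - s) / 2^(Suc p)) (s + real (2*k) * (t - s) / 2^(Suc p))
       + J (s + real (Suc (2*k+1)) * (t - s) / 2^(Suc p)) (s + real (2*k+1) * (t - s) / 2^(Suc p)))"
      by (rule split2)
    also have "\<dots> = (\<Sum>k<(2::nat)^p.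
      J (s + (2*real k + 1) * (t - s) / 2^(Suc p)) (s + real k * (t - s) / 2^p)
    + J (s + real (Suc k) * (t - s) / 2^p) (s + (2*real k + 1) * (t - s) / 2^(Suc p)))"
    proof (intro sum.cong refl)
      fix k
      have a1: "s + real (Suc (2*k)) * (t - s) / 2^(Suc p) = s + (2*real k + 1) * (t - s) / 2^(Suc p)" by simp
      have a2: "s + real (2*k) * (t - s) / 2^(Suc p) = s + real k * (t - s) / 2^p" by (simp add: field_simps)
      have a3: "s + real (Suc (2*k+1)) * (t - s) / 2^(Suc p) = s + real (Suc k) * (t - s) / 2^p" by (simp add: field_simps)
      have a4: "s + real (2*k+1) * (t - s) / 2^(Suc p) = s + (2*real k + 1) * (t - s) / 2^(Suc p)" by simp
      show "J (s + real (Suc (2*k)) * (t - s) / 2^(Suc p)) (s + real (2*k) * (t - s) / 2^(Suc p))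
       + J (s + real (Suc (2*k+1)) * (t - s) / 2^(Suc p)) (s + real (2*k+1) * (t - s) / 2^(Suc p))
       = J (s + (2*real k + 1) * (t - s) / 2^(Suc p)) (s + real k * (t - s) / 2^p)
    + J (s + real (Suc k) * (t - s) / 2^p) (s + (2*real k + 1) * (t - s) / 2^(Suc p))"
        unfolding a1 a2 a3 a4 by simp
    qed
    finally show ?thesis .
  qed
  moreover have "dyadic_sum J s t p = (\<Sum>k<(2::nat)^p. J (s + real (Suc k) * (t - s) / 2^p) (s + real k * (t - s) / 2^p))"
    by (simp add: dyadic_sum_def)
  ultimately show ?thesis
    unfolding deltaJ_def by (simp only: sum_aux)
qed

theorem lemma2p13:
  fixes l :: nat and \<mu> lam \<nu> \<epsilon> :: "nat \<Rightarrow> real" and \<omega> :: real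
  assumes exps: "\<forall>i\<in>{1..l}. 1 < \<mu> i \<and> 0 \<le> lam i \<and> lam i < \<mu> i \<and> 0 \<le> \<nu> i \<and> \<nu> i \<le> \<mu> i
                     \<and> 0 \<le> \<epsilon> i \<and> \<epsilon> i < 1"
    and om: "0 \<le> \<omega>" "\<exists>i\<in>{1..l}. \<omega> \<le> \<epsilon> i"
    and om2: "\<forall>i\<in>{1..l}. pos_part (\<epsilon> i - \<omega>) < \<mu> i - lam i"
  shows "\<exists>C::real. \<forall>(T::real) (J::real \<Rightarrow> real \<Rightarrow> 'a::banach) (s::real) (t::real) (JJ::'a) (A::nat \<Rightarrow> real).
     0 < T \<and> T \<le> 1
     \<and> continuous_on {(v, u). 0 \<le> u \<and> u \<le> v \<and> v \<le> T} (\<lambda>(v, u). J v u)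
     \<and> (\<forall>u. 0 \<le> u \<and> u \<le> T \<longrightarrow> J u u = 0)
     \<and> 0 \<le> s \<and> s \<le> t \<and> t \<le> T
     \<and> (dyadic_sum J s t \<longlonglongrightarrow> JJ)
     \<and> (\<forall>i\<in>{1..l}. 0 \<le> A i)
     \<and> (\<forall>u m v. s \<le> u \<and> u \<le> m \<and> m \<le> v \<and> v \<le> t \<and> 0 < m \<longrightarrow>
          norm (deltaJ J v m u)
            \<le> (\<Sum>i=1..l. A i * pw \<bar>t - u\<bar> (- lam i) * pw \<bar>u - m\<bar> (\<nu> i)
                           * pw \<bar>m - v\<bar> (\<mu> i - \<nu> i) * pw m (- \<epsilon> i)))
     \<longrightarrow> pw s \<omega> * norm (JJ - J t s)
           \<le> C * (\<Sum>i=1..l. A i * pw \<bar>t - s\<bar> (\<mu> i - lam i - pos_part (\<epsilon> i - \<omega>)))"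
proof -
  define X where "X = (\<lambda>i s t p k. 
        pw \<bar>t - (s + real k * (t - s) / 2^p)\<bar> (-lam i)
      * pw \<bar>(s + real k * (t - s) / 2^p) - (s + (2*real k + 1) * (t - s) / 2^(Suc p))\<bar> (\<nu> i)
      * pw \<bar>(s + (2*real k + 1) * (t - s) / 2^(Suc p)) - (s + real (Suc k) * (t - s) / 2^p)\<bar> (\<mu> i - \<nu> i)
      * pw (s + (2*real k + 1) * (t - s) / 2^(Suc p)) (-\<epsilon> i))"
  define R where "R = (\<lambda>i s t. pw \<bar>t - s\<bar> (\<mu> i - lam i - pos_part (\<epsilon> i - \<omega>)))"
  have "\<forall>i\<in>{1..l}. \<exists>C\<ge>0. \<forall>s t n. 0 \<le> s \<and> s < t \<and> t \<le> 1 \<longrightarrow>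
     pw s \<omega> * (\<Sum>p<n. \<Sum>k<(2::nat)^p. X i s t p k) \<le> C * R i s t"
  proof
    fix i assume i: "i \<in> {1..l}"
    show "\<exists>C\<ge>0. \<forall>s t n. 0 \<le> s \<and> s < t \<and> t \<le> 1 \<longrightarrow>
     pw s \<omega> * (\<Sum>p<n. \<Sum>k<(2::nat)^p. X i s t p k) \<le> C * R i s t"
      unfolding X_def R_def
      by (rule level_bound) (use exps om om2 i in auto)
  qed
  then obtain Cf where Cf: "\<forall>i\<in>{1..l}. Cf i \<ge> 0 \<and> (\<forall>s t n. 0 \<le> s \<and> s < t \<and> t \<le> 1 \<longrightarrow>
     pw s \<omega> * (\<Sum>p<n. \<Sum>k<(2::nat)^p. X i s t p k) \<le> Cf i * R i s t)"
    by metis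
  define C where "C = (\<Sum>i=1..l. Cf i)"
  have C0: "0 \<le> C" using Cf unfolding C_def by (intro sum_nonneg) auto
  have Ci: "Cf i \<le> C" if "i \<in> {1..l}" for i
    unfolding C_def using Cf that by (intro member_le_sum) auto
  show ?thesis
  proof (intro exI[of _ C] allI impI, elim conjE)
    fix T :: real and J :: "real \<Rightarrow> real \<Rightarrow> 'a" and s t :: real and JJ :: 'a and A :: "nat \<Rightarrow> real"
    assume T: "0 < T" "T \<le> 1" and J0: "\<forall>u. 0 \<le> u \<and> u \<le> T \<longrightarrow> J u u = 0"
      and st: "0 \<le> s" "s \<le> t" "t \<le> T" and lim: "dyadic_sum J s t \<longlonglongrightarrow> JJ"
      and A0: "\<forall>i\<in>{1..l}. 0 \<le> A i"
      and hyp: "\<forall>u m v. s \<le> u \<and> u \<le> m \<and> m \<le> v \<and> v \<le> t \<and> 0 < m \<longrightarrow>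
          norm (deltaJ J v m u)
            \<le> (\<Sum>i=1..l. A i * pw \<bar>t - u\<bar> (- lam i) * pw \<bar>u - m\<bar> (\<nu> i)
                           * pw \<bar>m - v\<bar> (\<mu> i - \<nu> i) * pw m (- \<epsilon> i))"
    have Rnn: "0 \<le> C * (\<Sum>i=1..l. A i * pw \<bar>t - s\<bar> (\<mu> i - lam i - pos_part (\<epsilon> i - \<omega>)))"
      using C0 A0 by (intro mult_nonneg_nonneg sum_nonneg) (auto simp: pw_nonneg)
    show "pw s \<omega> * norm (JJ - J t s)
           \<le> C * (\<Sum>i=1..l. A i * pw \<bar>t - s\<bar> (\<mu> i - lam i - pos_part (\<epsilon> i - \<omega>)))"
    proof (cases "s = t")
      case True
      have "dyadic_sum J s t n = 0" for n
        using True J0 st by (simp add: dyadic_sum_def)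
      then have "dyadic_sum J s t = (\<lambda>n. 0)" by (rule ext)
      then have "JJ = 0" using lim LIMSEQ_unique[OF lim, of 0] by simp
      then show ?thesis using True J0 st Rnn by simp
    next
      case False
      then have slt: "s < t" using st by simp
      have t1: "t \<le> 1" using st T by simp
      have bd: "pw s \<omega> * norm (dyadic_sum J s t n - J t s)
           \<le> C * (\<Sum>i=1..l. A i * pw \<bar>t - s\<bar> (\<mu> i - lam i - pos_part (\<epsilon> i - \<omega>)))" for n
      proof -
        have dk: "norm (deltaJ J (s + real (Suc k) * (t - s) / 2^p) (s + (2*real k + 1) * (t - s) / 2^(Suc p)) (s + real k * (t - s) / 2^p))
           \<le> (\<Sum>i=1..l. A i * X i s t p k)" if k: "k < 2^p" for p k
        proof -
          define h where "h = (t - s) / 2^p"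
          have h0: "0 < h" using slt by (simp add: h_def)
          have e1: "s + real k * (t - s) / 2^p = s + real k * h" by (simp add: h_def)
          have e2: "s + (2*real k + 1) * (t - s) / 2^(Suc p) = s + real k * h + h/2"
            by (simp add: h_def field_simps)
          have e3: "s + real (Suc k) * (t - s) / 2^p = s + real k * h + h" by (simp add: h_def field_simps)
          have "real (k+1) \<le> real ((2::nat)^p)" by (rule of_nat_mono) (use k in simp)
          then have "real k + 1 \<le> 2^p" by simp
          then have "(real k + 1) * h \<le> 2^p * h" using h0 by (intro mult_right_mono) auto
          moreover have "(2::real)^p * h = t - s" by (simp add: h_def)
          moreover have "(real k + 1) * h = real k * h + h" by (simp add: algebra_simps)
          ultimately have vt: "s + real k * h + h \<le> t" by linarith
          have "0 \<le> real k * h" using h0 by simp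
          then have conds: "s \<le> s + real k * h" "s + real k * h \<le> s + real k * h + h/2"
            "s + real k * h + h/2 \<le> s + real k * h + h" "0 < s + real k * h + h/2"
            using h0 st by (auto intro!: add_nonneg_pos add_nonneg_nonneg)
          show ?thesis
            using hyp[rule_format, of "s + real k * (t - s) / 2^p" "s + (2*real k + 1) * (t - s) / 2^(Suc p)"
                "s + real (Suc k) * (t - s) / 2^p"]
            unfolding e1 e2 e3 X_def using conds vt by (simp add: mult.assoc)
        qed
        have "norm (dyadic_sum J s t n - J t s) = norm (\<Sum>p<n. dyadic_sum J s t (Suc p) - dyadic_sum J s t p)"
          by (simp add: sum_lessThan_telescope dyadic0)
        also have "\<dots> \<le> (\<Sum>p<n. norm (dyadic_sum J s t (Suc p) - dyadic_sum J s t p))"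
          by (rule norm_sum)
        also have "\<dots> \<le> (\<Sum>p<n. \<Sum>k<(2::nat)^p. \<Sum>i=1..l. A i * X i s t p k)"
        proof (intro sum_mono)
          fix p assume "p \<in> {..<n}"
          have "norm (dyadic_sum J s t (Suc p) - dyadic_sum J s t p) = norm (\<Sum>k<(2::nat)^p.
             deltaJ J (s + real (Suc k) * (t - s) / 2^p) (s + (2*real k + 1) * (t - s) / 2^(Suc p)) (s + real k * (t - s) / 2^p))"
            unfolding dyadic_step by (rule norm_minus_cancel)
          also have "\<dots> \<le> (\<Sum>k<(2::nat)^p. norm (
             deltaJ J (s + real (Suc k) * (t - s) / 2^p) (s + (2*real k + 1) * (t - s) / 2^(Suc p)) (s + real k * (t - s) / 2^p)))"
            by (rule norm_sum)
          also have "\<dots> \<le> (\<Sum>k<(2::nat)^p. \<Sum>i=1..l. A i * X i s t p k)"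
            by (intro sum_mono dk) simp
          finally show "norm (dyadic_sum J s t (Suc p) - dyadic_sum J s t p) \<le> (\<Sum>k<(2::nat)^p. \<Sum>i=1..l. A i * X i s t p k)" .
        qed
        also have "\<dots> = (\<Sum>p<n. \<Sum>i=1..l. \<Sum>k<(2::nat)^p. A i * X i s t p k)"
          by (rule sum.cong[OF refl]) (rule sum.swap)
        also have "\<dots> = (\<Sum>i=1..l. \<Sum>p<n. \<Sum>k<(2::nat)^p. A i * X i s t p k)"
          by (rule sum.swap)
        also have "\<dots> = (\<Sum>i=1..l. A i * (\<Sum>p<n. \<Sum>k<(2::nat)^p. X i s t p k))"
          by (simp add: sum_distrib_left)
        finally have n1: "norm (dyadic_sum J s t n - J t s) \<le> (\<Sum>i=1..l. A i * (\<Sum>p<n. \<Sum>k<(2::nat)^p. X i s t p k))" .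
        have "pw s \<omega> * norm (dyadic_sum J s t n - J t s) \<le> pw s \<omega> * (\<Sum>i=1..l. A i * (\<Sum>p<n. \<Sum>k<(2::nat)^p. X i s t p k))"
          using n1 st by (intro mult_left_mono) (auto simp: pw_nonneg)
        also have "\<dots> = (\<Sum>i=1..l. A i * (pw s \<omega> * (\<Sum>p<n. \<Sum>k<(2::nat)^p. X i s t p k)))"
          by (simp add: sum_distrib_left ac_simps)
        also have "\<dots> \<le> (\<Sum>i=1..l. A i * (Cf i * R i s t))"
          using Cf A0 st slt t1 by (intro sum_mono mult_left_mono) auto
        also have "\<dots> \<le> (\<Sum>i=1..l. C * (A i * R i s t))"
        proof (intro sum_mono)
          fix i assume i: "i \<in> {1..l}"
          have "0 \<le> A i * R i s t" using A0 i by (auto simp: R_def pw_nonneg)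
          then have "Cf i * (A i * R i s t) \<le> C * (A i * R i s t)"
            using Ci[OF i] by (intro mult_right_mono) auto
          then show "A i * (Cf i * R i s t) \<le> C * (A i * R i s t)" by (simp add: ac_simps)
        qed
        also have "\<dots> = C * (\<Sum>i=1..l. A i * pw \<bar>t - s\<bar> (\<mu> i - lam i - pos_part (\<epsilon> i - \<omega>)))"
          by (simp add: sum_distrib_left R_def)
        finally show ?thesis .
      qed
      have "(\<lambda>n. pw s \<omega> * norm (dyadic_sum J s t n - J t s)) \<longlonglongrightarrow> pw s \<omega> * norm (JJ - J t s)"
        by (intro tendsto_intros lim)
      then show ?thesis
        by (rule LIMSEQ_le_const2) (use bd in auto)
    qed
  qed
qed

end
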